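(* Let $(\Gamma,\Lambda)$ be a Hecke pair with $\Lambda$ finitely generated. Suppose there is a locally compact group $E$ and a homomorphism $\phi:\Gamma\to E$ such that $\phi|_\Lambda$ is a virtual uniform lattice embedding. Then $E$ is an engulfing group of $(\Gamma,\Lambda)$ and $\Lambda$ is uniformly commensurated in $\Gamma$.
   Context: A Hecke pair $(\Gamma,\Lambda)$ is a group with a commensurated subgroup. Virtual uniform lattice embedding: finite kernel, discrete cocompact image. $E$ is an engulfing group of $(\Gamma,\Lambda)$ if there are a virtual uniform lattice embedding $\rho:\Lambda\to E$ and a homomorphism $\Delta:\Gamma\to\mathrm{Aut}(E)$ extending $h\mapsto$ conjugation by $\rho(h)$ on $\Lambda$, such that for every $g\in\Gamma$, $\Delta(g)(\rho(h))=\rho(ghg^{-1})$ for all $h$ in some finite index subgroup of $\Lambda$. Uniformly commensurated: there are $K,A$ such that each element of the image of the conjugation map $\Gamma\to\mathrm{Comm}(\Lambda)\to\mathrm{QI}(\Lambda)$ is represented by a $(K,A)$-quasi-isometry of $\Lambda$ (word metric). *)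

theory Defs
  imports "HOL-Analysis.Analysis" "HOL-Algebra.Generated_Groups" "HOL-Algebra.Coset"
begin

definition conj_set :: "('a, 'm) monoid_scheme \<Rightarrow> 'a \<Rightarrow> 'a set \<Rightarrow> 'a set" where
  "conj_set G g H = (\<lambda>h. g \<otimes>\<^bsub>G\<^esub> h \<otimes>\<^bsub>G\<^esub> inv\<^bsub>G\<^esub> g) ` H"

definition finite_index_in :: "('a, 'm) monoid_scheme \<Rightarrow> 'a set \<Rightarrow> 'a set \<Rightarrow> bool" where
  "finite_index_in G H K \<longleftrightarrow> subgroup H G \<and> H \<subseteq> K \<and> finite ((\<lambda>k. H #>\<^bsub>G\<^esub> k) ` K)"

definition hecke_pair :: "('a, 'm) monoid_scheme \<Rightarrow> 'a set \<Rightarrow> bool" where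
  "hecke_pair G L \<longleftrightarrow> group G \<and> subgroup L G \<and>
     (\<forall>g \<in> carrier G. finite_index_in G (L \<inter> conj_set G g L) L
                     \<and> finite_index_in G (L \<inter> conj_set G g L) (conj_set G g L))"

definition finitely_generated_subgroup :: "('a, 'm) monoid_scheme \<Rightarrow> 'a set \<Rightarrow> bool" where
  "finitely_generated_subgroup G L \<longleftrightarrow> (\<exists>S. finite S \<and> S \<subseteq> L \<and> generate G S = L)"

definition topological_group :: "('b, 'n) monoid_scheme \<Rightarrow> 'b topology \<Rightarrow> bool" where
  "topological_group E T \<longleftrightarrow> group E \<and> topspace T = carrier E \<and>
     continuous_map (prod_topology T T) T (\<lambda>(x, y). x \<otimes>\<^bsub>E\<^esub> y) \<and>
     continuous_map T T (\<lambda>x. inv\<^bsub>E\<^esub> x)"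

definition locally_compact_group :: "('b, 'n) monoid_scheme \<Rightarrow> 'b topology \<Rightarrow> bool" where
  "locally_compact_group E T \<longleftrightarrow> topological_group E T \<and> Hausdorff_space T \<and> locally_compact_space T"

definition discrete_subgroup :: "('b, 'n) monoid_scheme \<Rightarrow> 'b topology \<Rightarrow> 'b set \<Rightarrow> bool" where
  "discrete_subgroup E T H \<longleftrightarrow> subgroup H E \<and> subtopology T H = discrete_topology H"

definition cocompact_subgroup :: "('b, 'n) monoid_scheme \<Rightarrow> 'b topology \<Rightarrow> 'b set \<Rightarrow> bool" where
  "cocompact_subgroup E T H \<longleftrightarrow> subgroup H E \<and>
     (\<exists>Q :: 'b set topology. quotient_map T Q (\<lambda>e. e <#\<^bsub>E\<^esub> H) \<and> compact_space Q)"

text \<open>rho : L \<rightarrow> E (L a subgroup of G) is a virtual uniform lattice embedding: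
  a homomorphism with finite kernel and discrete cocompact image.\<close>
definition vule :: "('a, 'm) monoid_scheme \<Rightarrow> 'a set \<Rightarrow> ('b, 'n) monoid_scheme \<Rightarrow> 'b topology
                    \<Rightarrow> ('a \<Rightarrow> 'b) \<Rightarrow> bool" where
  "vule G L E T \<rho> \<longleftrightarrow> \<rho> \<in> hom (G\<lparr>carrier := L\<rparr>) E \<and>
     finite {h \<in> L. \<rho> h = \<one>\<^bsub>E\<^esub>} \<and>
     discrete_subgroup E T (\<rho> ` L) \<and> cocompact_subgroup E T (\<rho> ` L)"

definition top_group_aut :: "('b, 'n) monoid_scheme \<Rightarrow> 'b topology \<Rightarrow> ('b \<Rightarrow> 'b) \<Rightarrow> bool" where
  "top_group_aut E T f \<longleftrightarrow> f \<in> hom E E \<and> bij_betw f (carrier E) (carrier E) \<and> homeomorphic_map T T f"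

definition engulfing_group ::
  "('a, 'm) monoid_scheme \<Rightarrow> 'a set \<Rightarrow> ('b, 'n) monoid_scheme \<Rightarrow> 'b topology \<Rightarrow> bool" where
  "engulfing_group G L E T \<longleftrightarrow>
    (\<exists>\<rho> (\<Delta> :: 'a \<Rightarrow> 'b \<Rightarrow> 'b).
       vule G L E T \<rho> \<and>
       \<comment> \<open>Delta : G \<rightarrow> Aut(E) is a homomorphism\<close>
       (\<forall>g \<in> carrier G. top_group_aut E T (\<Delta> g)) \<and>
       (\<forall>g1 \<in> carrier G. \<forall>g2 \<in> carrier G. \<forall>e \<in> carrier E.
           \<Delta> (g1 \<otimes>\<^bsub>G\<^esub> g2) e = \<Delta> g1 (\<Delta> g2 e)) \<and>
       \<comment> \<open>Delta extends h \<mapsto> conjugation by rho(h) on L\<close>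
       (\<forall>h \<in> L. \<forall>e \<in> carrier E. \<Delta> h e = \<rho> h \<otimes>\<^bsub>E\<^esub> e \<otimes>\<^bsub>E\<^esub> inv\<^bsub>E\<^esub> (\<rho> h)) \<and>
       \<comment> \<open>Delta(g)(rho(h)) = rho(g h g^-1) on a finite index subgroup of L\<close>
       (\<forall>g \<in> carrier G. \<exists>L'. finite_index_in G L' L \<and>
           (\<forall>h \<in> L'. g \<otimes>\<^bsub>G\<^esub> h \<otimes>\<^bsub>G\<^esub> inv\<^bsub>G\<^esub> g \<in> L \<and>
                     \<Delta> g (\<rho> h) = \<rho> (g \<otimes>\<^bsub>G\<^esub> h \<otimes>\<^bsub>G\<^esub> inv\<^bsub>G\<^esub> g))))"

definition word_length :: "('a, 'm) monoid_scheme \<Rightarrow> 'a set \<Rightarrow> 'a \<Rightarrow> nat" where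
  "word_length G S x = (LEAST n. \<exists>ws. length ws = n \<and>
       set ws \<subseteq> S \<union> (\<lambda>s. inv\<^bsub>G\<^esub> s) ` S \<and> foldr (\<lambda>a b. a \<otimes>\<^bsub>G\<^esub> b) ws \<one>\<^bsub>G\<^esub> = x)"

definition word_dist :: "('a, 'm) monoid_scheme \<Rightarrow> 'a set \<Rightarrow> 'a \<Rightarrow> 'a \<Rightarrow> real" where
  "word_dist G S x y = real (word_length G S (inv\<^bsub>G\<^esub> x \<otimes>\<^bsub>G\<^esub> y))"

definition quasi_isometry ::
  "('c \<Rightarrow> 'c \<Rightarrow> real) \<Rightarrow> 'c set \<Rightarrow> real \<Rightarrow> real \<Rightarrow> ('c \<Rightarrow> 'c) \<Rightarrow> bool" where
  "quasi_isometry d X K A f \<longleftrightarrow> K \<ge> 1 \<and> A \<ge> 0 \<and> f ` X \<subseteq> X \<and>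
     (\<forall>x \<in> X. \<forall>y \<in> X. d x y / K - A \<le> d (f x) (f y) \<and> d (f x) (f y) \<le> K * d x y + A) \<and>
     (\<forall>y \<in> X. \<exists>x \<in> X. d (f x) y \<le> A)"

text \<open>L is uniformly commensurated in G: there are K, A such that for every g in G, the
  quasi-isometry class of L determined by the commensuration
  h \<mapsto> g h g^-1 (defined on the finite index subgroup L \<inter> g^-1 L g) contains a
  (K,A)-quasi-isometry, i.e. some (K,A)-quasi-isometry f of L lies at bounded distance
  from h \<mapsto> g h g^-1 on L \<inter> g^-1 L g. The word metric is that of an arbitrary finite
  generating set S of L (the notion does not depend on S).\<close>
definition uniformly_commensurated :: "('a, 'm) monoid_scheme \<Rightarrow> 'a set \<Rightarrow> bool" where
  "uniformly_commensurated G L \<longleftrightarrow>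
    (\<forall>S. finite S \<and> S \<subseteq> L \<and> generate G S = L \<longrightarrow>
      (\<exists>K A. \<forall>g \<in> carrier G. \<exists>f. quasi_isometry (word_dist G S) L K A f \<and>
         (\<exists>C. \<forall>h \<in> L \<inter> conj_set G (inv\<^bsub>G\<^esub> g) L.
                word_dist G S (f h) (g \<otimes>\<^bsub>G\<^esub> h \<otimes>\<^bsub>G\<^esub> inv\<^bsub>G\<^esub> g) \<le> C)))"

end

theory Submission
  imports Defs
begin


locale topgrp =
  fixes E :: "('b, 'n) monoid_scheme" (structure) and T :: "'b topology"
  assumes tg: "topological_group E T"
begin

lemma grp: "group E" using tg by (simp add: topological_group_def)
lemma tsp: "topspace T = carrier E" using tg by (simp add: topological_group_def)
lemma mcont: "continuous_map (prod_topology T T) T (\<lambda>(x, y). x \<otimes>\<^bsub>E\<^esub> y)"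
  using tg by (simp add: topological_group_def)
lemma icont: "continuous_map T T (\<lambda>x. inv\<^bsub>E\<^esub> x)"
  using tg by (simp add: topological_group_def)

lemma cont_bin:
  assumes "continuous_map X T f" "continuous_map X T g"
  shows "continuous_map X T (\<lambda>x. f x \<otimes>\<^bsub>E\<^esub> g x)"
proof -
  have "continuous_map X (prod_topology T T) (\<lambda>x. (f x, g x))"
    using assms by (simp add: continuous_map_paired)
  from continuous_map_compose[OF this mcont] show ?thesis by (simp add: o_def)
qed

lemma cont_inv:
  assumes "continuous_map X T f"
  shows "continuous_map X T (\<lambda>x. inv\<^bsub>E\<^esub> f x)"
  using continuous_map_compose[OF assms icont] by (simp add: o_def)

lemma cont_const: "a \<in> carrier E \<Longrightarrow> continuous_map X T (\<lambda>x. a)"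
  using tsp by simp

lemma lmult_cont: "a \<in> carrier E \<Longrightarrow> continuous_map T T (\<lambda>y. a \<otimes>\<^bsub>E\<^esub> y)"
  by (intro cont_bin cont_const continuous_map_id[unfolded id_def])

lemma rmult_cont: "a \<in> carrier E \<Longrightarrow> continuous_map T T (\<lambda>y. y \<otimes>\<^bsub>E\<^esub> a)"
  by (intro cont_bin cont_const continuous_map_id[unfolded id_def])

lemma conj_cont: "a \<in> carrier E \<Longrightarrow> b \<in> carrier E \<Longrightarrow> continuous_map T T (\<lambda>y. a \<otimes>\<^bsub>E\<^esub> y \<otimes>\<^bsub>E\<^esub> b)"
  by (intro cont_bin cont_const continuous_map_id[unfolded id_def])

lemma small_nbhd:
  assumes U: "openin T U" "\<one>\<^bsub>E\<^esub> \<in> U"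
  shows "\<exists>V. openin T V \<and> \<one>\<^bsub>E\<^esub> \<in> V \<and> (\<forall>a\<in>V. \<forall>b\<in>V. inv\<^bsub>E\<^esub> a \<otimes>\<^bsub>E\<^esub> b \<in> U)"
proof -
  interpret group E by (rule grp)
  have c: "continuous_map (prod_topology T T) T (\<lambda>p. inv\<^bsub>E\<^esub> (fst p) \<otimes>\<^bsub>E\<^esub> snd p)"
    by (intro cont_bin cont_inv continuous_map_fst continuous_map_snd)
  define W where "W = {p \<in> topspace (prod_topology T T). inv\<^bsub>E\<^esub> (fst p) \<otimes>\<^bsub>E\<^esub> snd p \<in> U}"
  have Wo: "openin (prod_topology T T) W" unfolding W_def by (rule openin_continuous_map_preimage[OF c U(1)])
  have Wm: "(\<one>, \<one>) \<in> W" using U tsp by (simp add: W_def)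
  obtain V1 V2 where V: "openin T V1" "openin T V2" "\<one> \<in> V1" "\<one> \<in> V2" "V1 \<times> V2 \<subseteq> W"
    using openin_prod_topology_alt[THEN iffD1, rule_format, OF Wo Wm] by (elim exE conjE)
  have "\<forall>a\<in>V1 \<inter> V2. \<forall>b\<in>V1 \<inter> V2. inv a \<otimes> b \<in> U"
  proof (intro ballI)
    fix a b assume "a \<in> V1 \<inter> V2" "b \<in> V1 \<inter> V2"
    hence "(a, b) \<in> W" using V(5) by blast
    thus "inv a \<otimes> b \<in> U" by (simp add: W_def)
  qed
  moreover have "openin T (V1 \<inter> V2)" using V by (simp add: openin_Int)
  ultimately show ?thesis using V(3,4) by blast
qed

lemma discrete_compact_finite:
  assumes D: "discrete_subgroup E T H" and C: "compactin T C"
  shows "finite (H \<inter> C)"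
proof -
  interpret group E by (rule grp)
  have sg: "subgroup H E" and dt: "subtopology T H = discrete_topology H"
    using D by (auto simp: discrete_subgroup_def)
  have "\<one> \<in> H" using sg by (rule subgroup.one_closed)
  hence "openin (subtopology T H) {\<one>}" using dt by simp
  then obtain U where U: "openin T U" "{\<one>} = U \<inter> H" unfolding openin_subtopology by blast
  have "\<one> \<in> U" using U(2) by blast
  then obtain V where V: "openin T V" "\<one> \<in> V" "\<And>a b. a\<in>V \<Longrightarrow> b\<in>V \<Longrightarrow> inv a \<otimes> b \<in> U"
    using small_nbhd[OF U(1)] by blast
  define N where "N x = {y \<in> topspace T. inv x \<otimes> y \<in> V}" for x
  have Csub: "C \<subseteq> carrier E" using C tsp by (simp add: compactin_def)
  have "\<forall>W\<in>N ` C. openin T W"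
  proof
    fix W assume "W \<in> N ` C"
    then obtain x where x: "x \<in> C" "W = N x" by blast
    have "inv x \<in> carrier E" using x Csub by auto
    from openin_continuous_map_preimage[OF lmult_cont[OF this] V(1)]
    show "openin T W" using x by (simp add: N_def)
  qed
  moreover have "C \<subseteq> \<Union>(N ` C)"
  proof
    fix x assume "x \<in> C"
    then have "x \<in> N x" using Csub V tsp by (auto simp: N_def)
    then show "x \<in> \<Union>(N ` C)" using \<open>x \<in> C\<close> by blast
  qed
  ultimately have cov: "(\<forall>W\<in>N ` C. openin T W) \<and> C \<subseteq> \<Union>(N ` C)" by (rule conjI)
  have "\<exists>F. finite F \<and> F \<subseteq> N ` C \<and> C \<subseteq> \<Union>F"
    by (rule C[unfolded compactin_def, THEN conjunct2, rule_format, of "N ` C", OF cov])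
  then obtain F where F: "finite F" "F \<subseteq> N ` C" "C \<subseteq> \<Union>F" by (elim exE conjE)
  obtain C' where C': "C' \<subseteq> C" "finite C'" "F = N ` C'"
    using finite_subset_image[OF F(1,2)] by (elim exE conjE)
  have sub: "H \<inter> C \<subseteq> (\<Union>x\<in>C'. H \<inter> N x)" using F(3) unfolding C'(3) by blast
  have one: "finite (H \<inter> N x)" if "x \<in> C'" for x
  proof (cases "H \<inter> N x = {}")
    case False
    then obtain a where a: "a \<in> H \<inter> N x" by blast
    have "H \<inter> N x \<subseteq> {a}"
    proof
      fix b assume b: "b \<in> H \<inter> N x"
      have xc: "x \<in> carrier E" using that C' Csub by auto
      have ac: "a \<in> carrier E" "b \<in> carrier E" using a b tsp by (auto simp: N_def)
      have "inv (inv x \<otimes> a) \<otimes> (inv x \<otimes> b) \<in> U" 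
        apply (rule V(3)) using a b by (simp_all add: N_def)
      moreover have "inv (inv x \<otimes> a) \<otimes> (inv x \<otimes> b) = inv a \<otimes> b"
        using xc ac by (simp add: inv_mult_group m_assoc) (simp add: m_assoc[symmetric])
      moreover have "inv a \<otimes> b \<in> H" using a b
        by (intro subgroup.m_closed[OF sg] subgroup.m_inv_closed[OF sg]) auto
      ultimately have "inv a \<otimes> b \<in> U \<inter> H" by simp
      hence "inv a \<otimes> b \<in> {\<one>}" using U(2) by simp
      hence "inv a \<otimes> b = \<one>" by simp
      have "a \<otimes> (inv a \<otimes> b) = b" using ac by (simp add: m_assoc[symmetric])
      hence "b = a" using \<open>inv a \<otimes> b = \<one>\<close> ac by simp
      thus "b \<in> {a}" by simp
    qed
    thus ?thesis by (rule finite_subset) simp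
  qed simp
  show ?thesis by (rule finite_subset[OF sub finite_UN_I[OF C'(2) one]])
qed

end


context topgrp begin

lemma coset_open:
  assumes H: "subgroup H E" and U: "openin T U"
  shows "openin T {y \<in> topspace T. y <# H \<in> (\<lambda>e. e <# H) ` U}"
proof -
  interpret group E by (rule grp)
  have Uc: "U \<subseteq> carrier E" using openin_subset[OF U] tsp by simp
  have eq: "{y \<in> topspace T. y <# H \<in> (\<lambda>e. e <# H) ` U} = (\<Union>h\<in>H. {y \<in> topspace T. y \<otimes> h \<in> U})"
  proof (rule equalityI; rule subsetI)
    fix y assume "y \<in> {y \<in> topspace T. y <# H \<in> (\<lambda>e. e <# H) ` U}"
    then obtain u where y: "y \<in> carrier E" and u: "u \<in> U" and eq: "y <# H = u <# H" using tsp by auto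
    have uc: "u \<in> carrier E" using u Uc by blast
    have "u \<in> u <# H" using subgroup.one_closed[OF H] uc unfolding l_coset_def by force
    hence "u \<in> y <# H" using eq by simp
    then obtain h where h: "h \<in> H" "u = y \<otimes> h" unfolding l_coset_def by blast
    thus "y \<in> (\<Union>h\<in>H. {y \<in> topspace T. y \<otimes> h \<in> U})" using y u tsp by blast
  next
    fix y assume "y \<in> (\<Union>h\<in>H. {y \<in> topspace T. y \<otimes> h \<in> U})"
    then obtain h where h: "h \<in> H" and y: "y \<in> carrier E" "y \<otimes> h \<in> U" using tsp by blast
    have "y \<otimes> h \<in> y <# H" using h unfolding l_coset_def by blast
    hence "y <# H = (y \<otimes> h) <# H" by (rule l_repr_independence[OF _ y(1) H])
    thus "y \<in> {y \<in> topspace T. y <# H \<in> (\<lambda>e. e <# H) ` U}" using y tsp by blast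
  qed
  have "openin T {y \<in> topspace T. y \<otimes> h \<in> U}" if "h \<in> H" for h
    using openin_continuous_map_preimage[OF rmult_cont U] that subgroup.mem_carrier[OF H] by blast
  thus ?thesis unfolding eq by (intro openin_Union) blast
qed

lemma cocompact_cover:
  assumes lc: "locally_compact_space T" and cc: "cocompact_subgroup E T H"
  shows "\<exists>K. compactin T K \<and> (\<forall>e\<in>carrier E. \<exists>k\<in>K. \<exists>h\<in>H. e = k \<otimes> h)"
proof -
  interpret group E by (rule grp)
  have H: "subgroup H E" using cc by (simp add: cocompact_subgroup_def)
  obtain Q :: "'b set topology" where qm: "quotient_map T Q (\<lambda>e. e <# H)" and cQ: "compact_space Q"
    using cc unfolding cocompact_subgroup_def by blast
  have "\<forall>x\<in>topspace T. \<exists>p. openin T (fst p) \<and> compactin T (snd p) \<and> x \<in> fst p \<and> fst p \<subseteq> snd p"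
    using lc unfolding locally_compact_space_def by force
  then obtain p where p: "\<And>x. x \<in> topspace T \<Longrightarrow> openin T (fst (p x)) \<and> compactin T (snd (p x)) \<and> x \<in> fst (p x) \<and> fst (p x) \<subseteq> snd (p x)"
    by metis
  define \<pi> where "\<pi> = (\<lambda>e. e <# H)"
  have img: "\<pi> ` topspace T = topspace Q" using qm by (simp add: quotient_map_def \<pi>_def)
  have opQ: "openin Q (\<pi> ` fst (p x))" if x: "x \<in> topspace T" for x
  proof -
    have o: "openin T (fst (p x))" using p[OF x] by blast
    have sub: "\<pi> ` fst (p x) \<subseteq> topspace Q" using openin_subset[OF o] img by blast
    have "openin T {y \<in> topspace T. \<pi> y \<in> \<pi> ` fst (p x)}"
      unfolding \<pi>_def by (rule coset_open[OF H o])
    thus ?thesis using qm sub unfolding quotient_map_def \<pi>_def by blast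
  qed
  have cov: "(\<forall>W\<in>(\<lambda>x. \<pi> ` fst (p x)) ` topspace T. openin Q W) \<and> topspace Q \<subseteq> \<Union>((\<lambda>x. \<pi> ` fst (p x)) ` topspace T)"
  proof
    show "\<forall>W\<in>(\<lambda>x. \<pi> ` fst (p x)) ` topspace T. openin Q W" using opQ by blast
    show "topspace Q \<subseteq> \<Union>((\<lambda>x. \<pi> ` fst (p x)) ` topspace T)"
    proof
      fix q assume "q \<in> topspace Q"
      then obtain x where x: "x \<in> topspace T" "q = \<pi> x" using img by blast
      have "x \<in> fst (p x)" using p[OF x(1)] by blast
      thus "q \<in> \<Union>((\<lambda>x. \<pi> ` fst (p x)) ` topspace T)" using x by blast
    qed
  qed
  have "\<exists>F. finite F \<and> F \<subseteq> (\<lambda>x. \<pi> ` fst (p x)) ` topspace T \<and> topspace Q \<subseteq> \<Union>F"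
    by (rule cQ[unfolded compact_space_def compactin_def, THEN conjunct2, rule_format, OF cov])
  then obtain F where F: "finite F" "F \<subseteq> (\<lambda>x. \<pi> ` fst (p x)) ` topspace T" "topspace Q \<subseteq> \<Union>F"
    by (elim exE conjE)
  obtain X where X: "X \<subseteq> topspace T" "finite X" "F = (\<lambda>x. \<pi> ` fst (p x)) ` X"
    using finite_subset_image[OF F(1,2)] by (elim exE conjE)
  define K where "K = (\<Union>x\<in>X. snd (p x))"
  have "compactin T K" unfolding K_def
    by (rule compactin_Union) (use X p in auto)
  moreover have "\<exists>k\<in>K. \<exists>h\<in>H. e = k \<otimes> h" if e: "e \<in> carrier E" for e
  proof -
    have "\<pi> e \<in> topspace Q" using img e tsp by blast
    then obtain x where x: "x \<in> X" "\<pi> e \<in> \<pi> ` fst (p x)" using F(3) X(3) by blast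
    then obtain u where u: "u \<in> fst (p x)" "\<pi> e = \<pi> u" by blast
    have xt: "x \<in> topspace T" using x X by blast
    have uK: "u \<in> K" using u(1) p[OF xt] x(1) unfolding K_def by blast
    have uc: "u \<in> carrier E" using u(1) p[OF xt] openin_subset tsp by blast
    have "e \<in> e <# H" using subgroup.one_closed[OF H] e unfolding l_coset_def by force
    hence "e \<in> u <# H" using u(2) by (simp add: \<pi>_def)
    then obtain h where "h \<in> H" "e = u \<otimes> h" unfolding l_coset_def by blast
    thus ?thesis using uK by blast
  qed
  ultimately show ?thesis by blast
qed

end


definition wprod :: "('a, 'm) monoid_scheme \<Rightarrow> 'a list \<Rightarrow> 'a" where
  "wprod G ws = foldr (\<lambda>a b. a \<otimes>\<^bsub>G\<^esub> b) ws \<one>\<^bsub>G\<^esub>"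

context group begin

lemma wprod_Nil[simp]: "wprod G [] = \<one>" by (simp add: wprod_def)
lemma wprod_Cons[simp]: "wprod G (a # ws) = a \<otimes> wprod G ws" by (simp add: wprod_def)

lemma wprod_closed: "set ws \<subseteq> carrier G \<Longrightarrow> wprod G ws \<in> carrier G"
  by (induction ws) auto

lemma wprod_append: "set xs \<subseteq> carrier G \<Longrightarrow> set ys \<subseteq> carrier G \<Longrightarrow>
   wprod G (xs @ ys) = wprod G xs \<otimes> wprod G ys"
  by (induction xs) (auto simp: m_assoc wprod_closed)

lemma gens_carrier: "S \<subseteq> carrier G \<Longrightarrow> S \<union> (\<lambda>s. inv s) ` S \<subseteq> carrier G"
  by auto

lemma generate_word:
  assumes S: "S \<subseteq> carrier G" and x: "x \<in> generate G S"
  shows "\<exists>ws. set ws \<subseteq> S \<union> (\<lambda>s. inv s) ` S \<and> wprod G ws = x"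
  using x
proof (induction rule: generate.induct)
  case one
  then show ?case by (intro exI[of _ "[]"]) simp
next
  case (incl h)
  then show ?case using S by (intro exI[of _ "[h]"]) auto
next
  case (inv h)
  then show ?case using S by (intro exI[of _ "[inv h]"]) auto
next
  case (eng h1 h2)
  then obtain w1 w2 where w: "set w1 \<subseteq> S \<union> (\<lambda>s. inv s) ` S" "wprod G w1 = h1"
     "set w2 \<subseteq> S \<union> (\<lambda>s. inv s) ` S" "wprod G w2 = h2" by blast
  have "set w1 \<subseteq> carrier G" "set w2 \<subseteq> carrier G" using w(1,3) gens_carrier[OF S] by blast+
  hence "wprod G (w1 @ w2) = h1 \<otimes> h2" using w by (simp add: wprod_append)
  thus ?case using w by (intro exI[of _ "w1 @ w2"]) auto
qed

lemma word_length_le: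
  assumes "set ws \<subseteq> S \<union> (\<lambda>s. inv s) ` S" "wprod G ws = x"
  shows "word_length G S x \<le> length ws"
  unfolding word_length_def
  by (rule Least_le) (use assms in \<open>auto simp: wprod_def\<close>)

lemma word_length_word:
  assumes S: "S \<subseteq> carrier G" and x: "x \<in> generate G S"
  shows "\<exists>ws. set ws \<subseteq> S \<union> (\<lambda>s. inv s) ` S \<and> wprod G ws = x \<and> length ws = word_length G S x"
proof -
  obtain ws where ws: "set ws \<subseteq> S \<union> (\<lambda>s. inv s) ` S" "wprod G ws = x"
    using generate_word[OF S x] by blast
  have "\<exists>ws'. length ws' = word_length G S x \<and> set ws' \<subseteq> S \<union> (\<lambda>s. inv s) ` S \<and>
        foldr (\<lambda>a b. a \<otimes> b) ws' \<one> = x"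
    unfolding word_length_def
    by (rule LeastI[of _ "length ws"]) (use ws in \<open>auto simp: wprod_def\<close>)
  thus ?thesis by (auto simp: wprod_def)
qed

lemma word_length_mult:
  assumes S: "S \<subseteq> carrier G" and x: "x \<in> generate G S" and y: "y \<in> generate G S"
  shows "word_length G S (x \<otimes> y) \<le> word_length G S x + word_length G S y"
proof -
  obtain w1 where w1: "set w1 \<subseteq> S \<union> (\<lambda>s. inv s) ` S" "wprod G w1 = x" "length w1 = word_length G S x"
    using word_length_word[OF S x] by blast
  obtain w2 where w2: "set w2 \<subseteq> S \<union> (\<lambda>s. inv s) ` S" "wprod G w2 = y" "length w2 = word_length G S y"
    using word_length_word[OF S y] by blast
  have c: "set w1 \<subseteq> carrier G" "set w2 \<subseteq> carrier G" using w1(1) w2(1) gens_carrier[OF S] by blast+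
  have "word_length G S (x \<otimes> y) \<le> length (w1 @ w2)"
    by (rule word_length_le) (use w1 w2 c in \<open>auto simp: wprod_append\<close>)
  thus ?thesis using w1 w2 by simp
qed

end


context group begin
lemma cancel_l1: "x \<in> carrier G \<Longrightarrow> y \<in> carrier G \<Longrightarrow> x \<otimes> (inv x \<otimes> y) = y"
  by (simp add: m_assoc[symmetric])
lemma cancel_l2: "x \<in> carrier G \<Longrightarrow> y \<in> carrier G \<Longrightarrow> inv x \<otimes> (x \<otimes> y) = y"
  by (simp add: m_assoc[symmetric])

lemma solve_r: "a \<in> carrier G \<Longrightarrow> x \<in> carrier G \<Longrightarrow> k \<in> carrier G \<Longrightarrow> a = x \<otimes> k \<Longrightarrow> x = a \<otimes> inv k"
  by (simp add: m_assoc)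

lemma alg1:
  assumes c: "a \<in> carrier G" "b \<in> carrier G" "c \<in> carrier G" "x1 \<in> carrier G" "x2 \<in> carrier G"
    "k1 \<in> carrier G" "k2 \<in> carrier G"
    and e1: "c \<otimes> a = x1 \<otimes> k1" and e2: "c \<otimes> b = x2 \<otimes> k2"
  shows "inv x1 \<otimes> x2 = k1 \<otimes> (inv a \<otimes> b) \<otimes> inv k2"
proof -
  have "x1 = c \<otimes> a \<otimes> inv k1" using solve_r[OF _ c(4,6) e1] c by simp
  moreover have "x2 = c \<otimes> b \<otimes> inv k2" using solve_r[OF _ c(5,7) e2] c by simp
  ultimately show ?thesis using c by (simp add: inv_mult_group m_assoc cancel_l2)
qed

lemma alg2:
  assumes c: "M \<in> carrier G" "N \<in> carrier G" "k1 \<in> carrier G" "k2 \<in> carrier G"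
    and e: "M = k1 \<otimes> N \<otimes> inv k2"
  shows "N = inv k1 \<otimes> M \<otimes> k2"
  using c by (simp add: e m_assoc cancel_l2)

lemma alg3:
  assumes c: "a \<in> carrier G" "c \<in> carrier G" "x \<in> carrier G" "y \<in> carrier G"
    "k \<in> carrier G" "k2 \<in> carrier G"
    and e1: "c \<otimes> a = x \<otimes> k2" and e2: "inv c \<otimes> y = a \<otimes> k"
  shows "inv x \<otimes> y = k2 \<otimes> k"
proof -
  have "y = c \<otimes> (a \<otimes> k)" using c by (simp add: e2[symmetric] cancel_l1)
  also have "\<dots> = x \<otimes> k2 \<otimes> k" using c by (simp add: m_assoc[symmetric] e1)
  finally show ?thesis using c by (simp add: m_assoc cancel_l2)
qed

lemma conj_back: "g \<in> carrier G \<Longrightarrow> l \<in> carrier G \<Longrightarrow> g \<otimes> (inv g \<otimes> l \<otimes> inv (inv g)) \<otimes> inv g = l"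
  by (simp add: m_assoc cancel_l1)

lemma conj_back2: "g \<in> carrier G \<Longrightarrow> l \<in> carrier G \<Longrightarrow> inv g \<otimes> (g \<otimes> l \<otimes> inv g) \<otimes> g = l"
  by (simp add: m_assoc cancel_l2)

lemma conj_back3: "g \<in> carrier G \<Longrightarrow> l \<in> carrier G \<Longrightarrow> g \<otimes> (inv g \<otimes> l \<otimes> g) \<otimes> inv g = l"
  by (simp add: m_assoc cancel_l1)

lemma conj_mult: "c \<in> carrier G \<Longrightarrow> x \<in> carrier G \<Longrightarrow> y \<in> carrier G \<Longrightarrow>
  c \<otimes> (x \<otimes> y) \<otimes> inv c = (c \<otimes> x \<otimes> inv c) \<otimes> (c \<otimes> y \<otimes> inv c)"
  by (simp add: m_assoc cancel_l2)

lemma conj_comp: "a \<in> carrier G \<Longrightarrow> b \<in> carrier G \<Longrightarrow> e \<in> carrier G \<Longrightarrow>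
  (a \<otimes> b) \<otimes> e \<otimes> inv (a \<otimes> b) = a \<otimes> (b \<otimes> e \<otimes> inv b) \<otimes> inv a"
  by (simp add: m_assoc inv_mult_group)

lemma alg4:
  assumes c: "a \<in> carrier G" "c \<in> carrier G" "x \<in> carrier G" "k \<in> carrier G"
    and e1: "c \<otimes> a = x \<otimes> k"
  shows "inv x \<otimes> (c \<otimes> a \<otimes> inv c) = k \<otimes> inv c"
  using c by (simp add: e1 m_assoc cancel_l2)
end



locale engctx = topgrp E T for E :: "('b, 'n) monoid_scheme" (structure) and T +
  fixes G :: "('a, 'm) monoid_scheme" and L :: "'a set" and \<phi> :: "'a \<Rightarrow> 'b"
    and S :: "'a set" and K1 :: "'b set"
  assumes grpG: "group G" and sgL: "subgroup L G" and hom: "\<phi> \<in> hom G E"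
    and Sfin: "finite S" and SL: "S \<subseteq> L" and gen: "generate G S = L"
    and K1c: "compactin T K1" and K1inv: "\<And>k. k \<in> K1 \<Longrightarrow> inv k \<in> K1"
    and cover: "\<And>e. e \<in> carrier E \<Longrightarrow> \<exists>h\<in>L. \<exists>k\<in>K1. e = \<phi> h \<otimes> k"
    and fin: "\<And>C. compactin T C \<Longrightarrow> finite {x \<in> L. \<phi> x \<in> C}"
begin

sublocale gh: group_hom G E \<phi>
  by (rule group_hom.intro[OF grpG grp]) (simp add: group_hom_axioms_def hom)

lemmas Eassoc = monoid.m_assoc[OF group.is_monoid[OF grp]]
lemmas Ecl2 = group.cancel_l2[OF grp]

lemma Lc: "L \<subseteq> carrier G" using sgL by (rule subgroup.subset)
lemma Sc: "S \<subseteq> carrier G" using SL Lc by blast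
lemma K1E: "K1 \<subseteq> carrier E" using K1c tsp by (simp add: compactin_def)

abbreviation "gens \<equiv> S \<union> (\<lambda>s. inv\<^bsub>G\<^esub> s) ` S"
abbreviation "wl \<equiv> word_length G S"

lemma gensL: "gens \<subseteq> L"
  using SL subgroup.m_inv_closed[OF sgL] by blast

definition "P = (\<Union>s\<in>insert \<one>\<^bsub>G\<^esub> gens. (\<lambda>p. fst p \<otimes> \<phi> s \<otimes> snd p) ` (K1 \<times> K1))"

lemma P_compact: "compactin T P"
  unfolding P_def
proof (rule compactin_Union)
  show "finite ((\<lambda>s. (\<lambda>p. fst p \<otimes> \<phi> s \<otimes> snd p) ` (K1 \<times> K1)) ` insert \<one>\<^bsub>G\<^esub> gens)"
    using Sfin by simp
next
  fix X assume "X \<in> (\<lambda>s. (\<lambda>p. fst p \<otimes> \<phi> s \<otimes> snd p) ` (K1 \<times> K1)) ` insert \<one>\<^bsub>G\<^esub> gens"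
  then obtain s where s: "s \<in> insert \<one>\<^bsub>G\<^esub> gens" "X = (\<lambda>p. fst p \<otimes> \<phi> s \<otimes> snd p) ` (K1 \<times> K1)"
    by blast
  have sc: "s \<in> carrier G" using s(1) gensL Lc by blast
  have "continuous_map (prod_topology T T) T (\<lambda>p. fst p \<otimes> \<phi> s \<otimes> snd p)"
    by (intro cont_bin cont_const continuous_map_fst continuous_map_snd hom_in_carrier[OF hom sc])
  moreover have "compactin (prod_topology T T) (K1 \<times> K1)" using K1c by (simp add: compactin_Times)
  ultimately show "compactin T X" unfolding s(2) by (rule image_compactin[rotated])
qed

lemma PI: "e = k \<otimes> \<phi> s \<otimes> k' \<Longrightarrow> k \<in> K1 \<Longrightarrow> s \<in> insert \<one>\<^bsub>G\<^esub> gens \<Longrightarrow> k' \<in> K1 \<Longrightarrow> e \<in> P"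
  unfolding P_def by (rule UN_I[of s]) (auto intro: image_eqI[of _ _ "(k, k')"])

definition "Bd = Max (insert 0 (wl ` {x \<in> L. \<phi> x \<in> P}))"

lemma Bd: "x \<in> L \<Longrightarrow> \<phi> x \<in> P \<Longrightarrow> wl x \<le> Bd"
  unfolding Bd_def by (rule Max_ge) (use fin[OF P_compact] in auto)

lemma chain:
  "set ws \<subseteq> gens \<Longrightarrow> x \<in> L \<Longrightarrow> k \<in> K1 \<Longrightarrow> k' \<in> K1 \<Longrightarrow>
   \<phi> x = k \<otimes> \<phi> (wprod G ws) \<otimes> k' \<Longrightarrow> wl x \<le> Bd * (length ws + 1)"
proof (induction ws arbitrary: x k)
  case Nil
  have "\<phi> x \<in> P" by (rule PI[of _ k "\<one>\<^bsub>G\<^esub>" k']) (use Nil in simp_all)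
  with Nil show ?case using Bd by simp
next
  case (Cons s ws)
  have sG: "s \<in> carrier G" using Cons.prems(1) gensL Lc by auto
  have wsg: "set ws \<subseteq> gens" using Cons.prems(1) by simp
  have wsG: "set ws \<subseteq> carrier G" using order_trans[OF order_trans[OF wsg gensL] Lc] .
  have kE: "k \<in> carrier E" "k' \<in> carrier E" using Cons.prems K1E by auto
  have "k \<otimes> \<phi> s \<in> carrier E" using kE sG by simp
  then obtain x1 k1 where x1: "x1 \<in> L" "k1 \<in> K1" "k \<otimes> \<phi> s = \<phi> x1 \<otimes> k1" using cover by blast
  have x1G: "x1 \<in> carrier G" and k1E: "k1 \<in> carrier E" using x1 Lc K1E by auto
  have "\<phi> x1 = k \<otimes> \<phi> s \<otimes> inv k1"
    by (rule group.solve_r[OF grp _ _ k1E x1(3)]) (use x1G kE sG in simp_all)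
  hence "\<phi> x1 \<in> P" by (rule PI) (use Cons.prems(1) K1inv[OF x1(2)] \<open>k \<in> K1\<close> in simp_all)
  hence b1: "wl x1 \<le> Bd" using Bd x1(1) by blast
  define x' where "x' = inv\<^bsub>G\<^esub> x1 \<otimes>\<^bsub>G\<^esub> x"
  have xG: "x \<in> carrier G" using Cons.prems Lc by auto
  have x'L: "x' \<in> L" unfolding x'_def using x1(1) Cons.prems(2)
    by (intro subgroup.m_closed[OF sgL] subgroup.m_inv_closed[OF sgL])
  have pw: "\<phi> (wprod G ws) \<in> carrier E" using group.wprod_closed[OF grpG wsG] by simp
  have "\<phi> x' = inv (\<phi> x1) \<otimes> \<phi> x" unfolding x'_def using x1G xG by simp
  also have "\<dots> = inv (\<phi> x1) \<otimes> (k \<otimes> \<phi> s \<otimes> \<phi> (wprod G ws) \<otimes> k')"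
    using Cons.prems(5) sG wsG pw kE hom_in_carrier[OF hom sG] group.wprod_closed[OF grpG wsG] by (simp add: Eassoc)
  also have "\<dots> = inv (\<phi> x1) \<otimes> (\<phi> x1 \<otimes> k1 \<otimes> \<phi> (wprod G ws) \<otimes> k')"
    by (simp add: x1(3))
  also have "\<dots> = k1 \<otimes> \<phi> (wprod G ws) \<otimes> k'"
    using x1G k1E pw kE by (simp add: Eassoc Ecl2)
  finally have "wl x' \<le> Bd * (length ws + 1)"
    by (intro Cons.IH[OF _ x'L x1(2) Cons.prems(4)]) (use Cons.prems(1) in auto)
  moreover have "x = x1 \<otimes>\<^bsub>G\<^esub> x'" unfolding x'_def using x1G xG by (simp add: group.cancel_l1[OF grpG])
  moreover have "wl (x1 \<otimes>\<^bsub>G\<^esub> x') \<le> wl x1 + wl x'"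
    using group.word_length_mult[OF grpG Sc] x1(1) x'L gen by simp
  ultimately show ?case using b1 by simp
qed

lemma dist:
  assumes "x \<in> L" "m \<in> L" "k \<in> K1" "k' \<in> K1" "\<phi> x = k \<otimes> \<phi> m \<otimes> k'"
  shows "wl x \<le> Bd * (wl m + 1)"
proof -
  obtain ws where ws: "set ws \<subseteq> gens" "wprod G ws = m" "length ws = wl m"
    using group.word_length_word[OF grpG Sc, of m] assms(2) gen by blast
  show ?thesis using chain[OF ws(1) assms(1,3,4)] assms(5) ws by simp
qed

end


context engctx begin

lemma wd: "word_dist G S a b = real (wl (inv\<^bsub>G\<^esub> a \<otimes>\<^bsub>G\<^esub> b))"
  by (simp add: word_dist_def)

lemma real_ineqs:
  fixes d d' B :: nat
  assumes "d' \<le> B * (d + 1)" "d \<le> B * (d' + 1)"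
  shows "real d / (real B + 1) - (real B + 1) \<le> real d'" "real d' \<le> (real B + 1) * real d + (real B + 1)"
proof -
  have M: "real B + 1 > 0" by simp
  have "real d \<le> real B * (real d' + 1)" using assms(2) by (metis of_nat_1 of_nat_add of_nat_le_iff of_nat_mult)
  also have "\<dots> \<le> (real B + 1) * (real d' + 1)" by (intro mult_right_mono) auto
  finally have "real d / (real B + 1) \<le> real d' + 1" using M by (simp add: divide_le_eq mult.commute)
  thus "real d / (real B + 1) - (real B + 1) \<le> real d'" by simp
  have "real d' \<le> real B * (real d + 1)" using assms(1) by (metis of_nat_1 of_nat_add of_nat_le_iff of_nat_mult)
  also have "\<dots> \<le> (real B + 1) * (real d + 1)" by (intro mult_right_mono) auto
  finally show "real d' \<le> (real B + 1) * real d + (real B + 1)" by (simp add: algebra_simps)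
qed

lemma qi:
  assumes g: "g \<in> carrier G"
  shows "\<exists>f. quasi_isometry (word_dist G S) L (real Bd + 1) (real Bd + 1) f \<and>
     (\<exists>C. \<forall>h \<in> L \<inter> conj_set G (inv\<^bsub>G\<^esub> g) L.
           word_dist G S (f h) (g \<otimes>\<^bsub>G\<^esub> h \<otimes>\<^bsub>G\<^esub> inv\<^bsub>G\<^esub> g) \<le> C)"
proof -
  define c where "c = \<phi> g"
  have cE: "c \<in> carrier E" unfolding c_def using g by simp
  define f where "f h = (SOME x. x \<in> L \<and> (\<exists>k\<in>K1. c \<otimes> \<phi> h = \<phi> x \<otimes> k))" for h
  have fspec: "f h \<in> L \<and> (\<exists>k\<in>K1. c \<otimes> \<phi> h = \<phi> (f h) \<otimes> k)" if h: "h \<in> L" for h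
  proof -
    have "c \<otimes> \<phi> h \<in> carrier E" using cE h Lc by auto
    hence "\<exists>x. x \<in> L \<and> (\<exists>k\<in>K1. c \<otimes> \<phi> h = \<phi> x \<otimes> k)" using cover by blast
    thus ?thesis unfolding f_def by (rule someI_ex)
  qed
  define M where "M = real Bd + 1"
  have dists: "word_dist G S h1 h2 / M - M \<le> word_dist G S (f h1) (f h2) \<and>
               word_dist G S (f h1) (f h2) \<le> M * word_dist G S h1 h2 + M"
    if h: "h1 \<in> L" "h2 \<in> L" for h1 h2
  proof -
    obtain k1 where k1: "k1 \<in> K1" "c \<otimes> \<phi> h1 = \<phi> (f h1) \<otimes> k1" using fspec[OF h(1)] by blast
    obtain k2 where k2: "k2 \<in> K1" "c \<otimes> \<phi> h2 = \<phi> (f h2) \<otimes> k2" using fspec[OF h(2)] by blast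
    have fL: "f h1 \<in> L" "f h2 \<in> L" using fspec h by blast+
    have hG: "h1 \<in> carrier G" "h2 \<in> carrier G" "f h1 \<in> carrier G" "f h2 \<in> carrier G"
      using h fL Lc by auto
    have kE: "k1 \<in> carrier E" "k2 \<in> carrier E" using k1 k2 K1E by auto
    define m where "m = inv\<^bsub>G\<^esub> h1 \<otimes>\<^bsub>G\<^esub> h2"
    define m' where "m' = inv\<^bsub>G\<^esub> f h1 \<otimes>\<^bsub>G\<^esub> f h2"
    have mL: "m \<in> L" "m' \<in> L" unfolding m_def m'_def using h fL
      by (auto intro!: subgroup.m_closed[OF sgL] subgroup.m_inv_closed[OF sgL])
    have mG: "m \<in> carrier G" "m' \<in> carrier G" using mL Lc by auto
    have pm: "\<phi> m = inv (\<phi> h1) \<otimes> \<phi> h2" unfolding m_def using hG by simp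
    have pm': "\<phi> m' = inv (\<phi> (f h1)) \<otimes> \<phi> (f h2)" unfolding m'_def using hG by simp
    have eA: "\<phi> m' = k1 \<otimes> \<phi> m \<otimes> inv k2" unfolding pm pm'
      by (rule group.alg1[OF grp _ _ cE _ _ kE k1(2) k2(2)]) (use hG in simp_all)
    have eB: "\<phi> m = inv k1 \<otimes> \<phi> m' \<otimes> k2"
      by (rule group.alg2[OF grp _ _ kE eA]) (use mG in simp_all)
    have d1: "wl m' \<le> Bd * (wl m + 1)" by (rule dist[OF mL(2) mL(1) k1(1) K1inv[OF k2(1)] eA])
    have d2: "wl m \<le> Bd * (wl m' + 1)" by (rule dist[OF mL(1) mL(2) K1inv[OF k1(1)] k2(1) eB])
    show ?thesis using real_ineqs[OF d1 d2] unfolding wd M_def m_def m'_def by simp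
  qed
  have surj: "\<exists>x\<in>L. word_dist G S (f x) y \<le> M" if y: "y \<in> L" for y
  proof -
    have yG: "y \<in> carrier G" using y Lc by auto
    have "inv c \<otimes> \<phi> y \<in> carrier E" using cE yG by simp
    then obtain h k where hk: "h \<in> L" "k \<in> K1" "inv c \<otimes> \<phi> y = \<phi> h \<otimes> k" using cover by blast
    obtain k2 where k2: "k2 \<in> K1" "c \<otimes> \<phi> h = \<phi> (f h) \<otimes> k2" using fspec[OF hk(1)] by blast
    have fL: "f h \<in> L" using fspec hk by blast
    have hG: "h \<in> carrier G" "f h \<in> carrier G" using hk fL Lc by auto
    have kE: "k \<in> carrier E" "k2 \<in> carrier E" using hk k2 K1E by auto
    have e: "inv (\<phi> (f h)) \<otimes> \<phi> y = k2 \<otimes> k"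
      by (rule group.alg3[OF grp _ cE _ _ kE(1) kE(2) k2(2) hk(3)]) (use hG yG in simp_all)
    define z where "z = inv\<^bsub>G\<^esub> f h \<otimes>\<^bsub>G\<^esub> y"
    have zL: "z \<in> L" unfolding z_def using fL y
      by (auto intro!: subgroup.m_closed[OF sgL] subgroup.m_inv_closed[OF sgL])
    have "\<phi> z = k2 \<otimes> \<phi> \<one>\<^bsub>G\<^esub> \<otimes> k" unfolding z_def using hG yG e kE by simp
    hence "\<phi> z \<in> P" by (rule PI) (use k2 hk in simp_all)
    hence "wl z \<le> Bd" using Bd zL by blast
    hence "word_dist G S (f h) y \<le> M" unfolding wd M_def z_def by simp
    thus ?thesis using hk(1) by blast
  qed
  have qi: "quasi_isometry (word_dist G S) L M M f"
    unfolding quasi_isometry_def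
  proof (intro conjI ballI)
    show "1 \<le> M" "0 \<le> M" unfolding M_def by simp_all
    show "f ` L \<subseteq> L" using fspec by blast
  next
    fix x y assume "x \<in> L" "y \<in> L"
    thus "word_dist G S x y / M - M \<le> word_dist G S (f x) (f y)"
         "word_dist G S (f x) (f y) \<le> M * word_dist G S x y + M" using dists by blast+
  next
    fix y assume "y \<in> L" thus "\<exists>x\<in>L. word_dist G S (f x) y \<le> M" by (rule surj)
  qed
  define Z where "Z = {z \<in> L. \<phi> z \<in> (\<lambda>a. a \<otimes> inv c) ` K1}"
  have "compactin T ((\<lambda>a. a \<otimes> inv c) ` K1)"
    by (rule image_compactin[OF K1c rmult_cont]) (use cE in simp)
  hence Zf: "finite Z" unfolding Z_def by (rule fin)
  define Cg where "Cg = Max (insert 0 (wl ` Z))"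
  have close: "word_dist G S (f h) (g \<otimes>\<^bsub>G\<^esub> h \<otimes>\<^bsub>G\<^esub> inv\<^bsub>G\<^esub> g) \<le> real Cg"
    if h: "h \<in> L \<inter> conj_set G (inv\<^bsub>G\<^esub> g) L" for h
  proof -
    obtain l where l: "l \<in> L" "h = inv\<^bsub>G\<^esub> g \<otimes>\<^bsub>G\<^esub> l \<otimes>\<^bsub>G\<^esub> inv\<^bsub>G\<^esub> (inv\<^bsub>G\<^esub> g)"
      using h unfolding conj_set_def by blast
    have hL: "h \<in> L" using h by blast
    have hG: "h \<in> carrier G" and lG: "l \<in> carrier G" using hL l Lc by auto
    have gl: "g \<otimes>\<^bsub>G\<^esub> h \<otimes>\<^bsub>G\<^esub> inv\<^bsub>G\<^esub> g = l" unfolding l(2)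
      by (rule group.conj_back[OF grpG g lG])
    obtain k where k: "k \<in> K1" "c \<otimes> \<phi> h = \<phi> (f h) \<otimes> k" using fspec[OF hL] by blast
    have fL: "f h \<in> L" using fspec hL by blast
    have fG: "f h \<in> carrier G" using fL Lc by auto
    have kE: "k \<in> carrier E" using k K1E by auto
    define z where "z = inv\<^bsub>G\<^esub> f h \<otimes>\<^bsub>G\<^esub> l"
    have zL: "z \<in> L" unfolding z_def using fL l(1)
      by (auto intro!: subgroup.m_closed[OF sgL] subgroup.m_inv_closed[OF sgL])
    have "\<phi> l = c \<otimes> \<phi> h \<otimes> inv c" unfolding gl[symmetric] c_def using g hG by simp
    hence "\<phi> z = inv (\<phi> (f h)) \<otimes> (c \<otimes> \<phi> h \<otimes> inv c)" unfolding z_def using fG lG by simp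
    also have "\<dots> = k \<otimes> inv c"
      by (rule group.alg4[OF grp _ cE _ kE k(2)]) (use hG fG in simp_all)
    finally have "z \<in> Z" unfolding Z_def using zL k(1) by blast
    hence "wl z \<le> Cg" unfolding Cg_def using Zf by (intro Max_ge) auto
    thus ?thesis unfolding wd gl z_def by simp
  qed
  show ?thesis using qi close unfolding M_def by blast
qed

end


context topgrp begin
lemma conj_aut:
  assumes c: "c \<in> carrier E"
  shows "top_group_aut E T (\<lambda>e. c \<otimes> e \<otimes> inv c)"
proof -
  interpret group E by (rule grp)
  have h: "(\<lambda>e. c \<otimes> e \<otimes> inv c) \<in> hom E E"
    by (rule homI) (use c in \<open>simp_all add: conj_mult\<close>)
  have b: "bij_betw (\<lambda>e. c \<otimes> e \<otimes> inv c) (carrier E) (carrier E)"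
    by (rule bij_betw_byWitness[where f'="\<lambda>e. inv c \<otimes> e \<otimes> c"]) (use c in \<open>auto simp: conj_back2 conj_back3\<close>)
  have "homeomorphic_maps T T (\<lambda>e. c \<otimes> e \<otimes> inv c) (\<lambda>e. inv c \<otimes> e \<otimes> c)"
    unfolding homeomorphic_maps_def
  proof (intro conjI ballI)
    show "continuous_map T T (\<lambda>e. c \<otimes> e \<otimes> inv c)" using c by (intro conj_cont) auto
    show "continuous_map T T (\<lambda>e. inv c \<otimes> e \<otimes> c)" using c by (intro conj_cont) auto
  next
    fix x assume "x \<in> topspace T" thus "inv c \<otimes> (c \<otimes> x \<otimes> inv c) \<otimes> c = x" using c tsp by (simp add: conj_back2)
  next
    fix x assume "x \<in> topspace T" 
    hence "x \<in> carrier E" using tsp by simp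
    thus "c \<otimes> (inv c \<otimes> x \<otimes> c) \<otimes> inv c = x" using c by (simp add: conj_back3)
  qed
  hence "homeomorphic_map T T (\<lambda>e. c \<otimes> e \<otimes> inv c)" using homeomorphic_map_maps by blast
  thus ?thesis using h b by (simp add: top_group_aut_def)
qed
end

lemma fib_finite:
  assumes gG: "group G" and gE: "group E" and hom: "\<phi> \<in> hom G E" and sgL: "subgroup L G"
    and ker: "finite {h \<in> L. \<phi> h = \<one>\<^bsub>E\<^esub>}" and fC: "finite (\<phi> ` L \<inter> C)"
  shows "finite {x \<in> L. \<phi> x \<in> C}"
proof -
  interpret gh: group_hom G E \<phi>
    by (rule group_hom.intro[OF gG gE]) (simp add: group_hom_axioms_def hom)
  have Lc: "L \<subseteq> carrier G" using sgL by (rule subgroup.subset)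
  have one: "finite {x \<in> L. \<phi> x = e}" for e
  proof (cases "{x \<in> L. \<phi> x = e} = {}")
    case False
    then obtain x0 where x0: "x0 \<in> L" "\<phi> x0 = e" by blast
    have "{x \<in> L. \<phi> x = e} \<subseteq> (\<lambda>k. x0 \<otimes>\<^bsub>G\<^esub> k) ` {h \<in> L. \<phi> h = \<one>\<^bsub>E\<^esub>}"
    proof
      fix x assume x: "x \<in> {x \<in> L. \<phi> x = e}"
      have xc: "x \<in> carrier G" "x0 \<in> carrier G" using x x0 Lc by auto
      have eE: "e \<in> carrier E" using x0 xc hom_in_carrier[OF hom] by blast
      have "inv\<^bsub>G\<^esub> x0 \<otimes>\<^bsub>G\<^esub> x \<in> L" using x x0
        by (auto intro!: subgroup.m_closed[OF sgL] subgroup.m_inv_closed[OF sgL])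
      moreover have "\<phi> (inv\<^bsub>G\<^esub> x0 \<otimes>\<^bsub>G\<^esub> x) = \<one>\<^bsub>E\<^esub>" using xc x x0 eE by simp
      moreover have "x = x0 \<otimes>\<^bsub>G\<^esub> (inv\<^bsub>G\<^esub> x0 \<otimes>\<^bsub>G\<^esub> x)"
        using xc by (simp add: group.cancel_l1[OF gG])
      ultimately show "x \<in> (\<lambda>k. x0 \<otimes>\<^bsub>G\<^esub> k) ` {h \<in> L. \<phi> h = \<one>\<^bsub>E\<^esub>}" by blast
    qed
    thus ?thesis by (rule finite_subset) (use ker in simp)
  next
    case True
    show ?thesis unfolding True by (rule finite.emptyI)
  qed
  have "{x \<in> L. \<phi> x \<in> C} \<subseteq> (\<Union>e\<in>\<phi> ` L \<inter> C. {x \<in> L. \<phi> x = e})" by blast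
  thus ?thesis by (rule finite_subset) (use fC one in blast)
qed



theorem lemma3p8:
  fixes G :: "('a, 'm) monoid_scheme" and L :: "'a set"
    and E :: "('b, 'n) monoid_scheme" and T :: "'b topology" and \<phi> :: "'a \<Rightarrow> 'b"
  assumes "hecke_pair G L"
    and "finitely_generated_subgroup G L"
    and "locally_compact_group E T"
    and "\<phi> \<in> hom G E"
    and "vule G L E T \<phi>"
  shows "engulfing_group G L E T \<and> uniformly_commensurated G L"
proof -
  note hp = assms(1) and lcg = assms(3) and hom = assms(4) and vu = assms(5)
  have tg: "topological_group E T" and lc: "locally_compact_space T"
    using lcg by (auto simp: locally_compact_group_def)
  interpret topgrp E T by (rule topgrp.intro[OF tg])
  have gG: "group G" and sgL: "subgroup L G" using hp by (auto simp: hecke_pair_def)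
  have gE: "group E" by (rule grp)
  interpret gh: group_hom G E \<phi>
    by (rule group_hom.intro[OF gG gE]) (simp add: group_hom_axioms_def hom)
  have Lc: "L \<subseteq> carrier G" using sgL by (rule subgroup.subset)
  have ker: "finite {h \<in> L. \<phi> h = \<one>\<^bsub>E\<^esub>}" and disc: "discrete_subgroup E T (\<phi> ` L)"
    and coc: "cocompact_subgroup E T (\<phi> ` L)"
    using vu by (auto simp: vule_def)
  define \<Delta> where "\<Delta> g e = \<phi> g \<otimes>\<^bsub>E\<^esub> e \<otimes>\<^bsub>E\<^esub> inv\<^bsub>E\<^esub> (\<phi> g)" for g e
  have eng: "engulfing_group G L E T"
    unfolding engulfing_group_def
  proof (intro exI conjI)
    show "vule G L E T \<phi>" by (rule vu)
    show "\<forall>g\<in>carrier G. top_group_aut E T (\<Delta> g)"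
      unfolding \<Delta>_def by (intro ballI conj_aut) simp
    show "\<forall>g1\<in>carrier G. \<forall>g2\<in>carrier G. \<forall>e\<in>carrier E. \<Delta> (g1 \<otimes>\<^bsub>G\<^esub> g2) e = \<Delta> g1 (\<Delta> g2 e)"
      unfolding \<Delta>_def by (simp add: group.conj_comp[OF gE])
    show "\<forall>h\<in>L. \<forall>e\<in>carrier E. \<Delta> h e = \<phi> h \<otimes>\<^bsub>E\<^esub> e \<otimes>\<^bsub>E\<^esub> inv\<^bsub>E\<^esub> (\<phi> h)"
      unfolding \<Delta>_def by simp
    show "\<forall>g\<in>carrier G. \<exists>L'. finite_index_in G L' L \<and>
        (\<forall>h\<in>L'. g \<otimes>\<^bsub>G\<^esub> h \<otimes>\<^bsub>G\<^esub> inv\<^bsub>G\<^esub> g \<in> L \<and>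
           \<Delta> g (\<phi> h) = \<phi> (g \<otimes>\<^bsub>G\<^esub> h \<otimes>\<^bsub>G\<^esub> inv\<^bsub>G\<^esub> g))"
    proof
      fix g assume g: "g \<in> carrier G"
      have ig: "inv\<^bsub>G\<^esub> g \<in> carrier G" using g by simp
      have fi: "finite_index_in G (L \<inter> conj_set G (inv\<^bsub>G\<^esub> g) L) L"
        using hp ig unfolding hecke_pair_def by blast
      have "\<forall>h\<in>L \<inter> conj_set G (inv\<^bsub>G\<^esub> g) L. g \<otimes>\<^bsub>G\<^esub> h \<otimes>\<^bsub>G\<^esub> inv\<^bsub>G\<^esub> g \<in> L \<and>
           \<Delta> g (\<phi> h) = \<phi> (g \<otimes>\<^bsub>G\<^esub> h \<otimes>\<^bsub>G\<^esub> inv\<^bsub>G\<^esub> g)"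
      proof
        fix h assume h: "h \<in> L \<inter> conj_set G (inv\<^bsub>G\<^esub> g) L"
        obtain l where l: "l \<in> L" "h = inv\<^bsub>G\<^esub> g \<otimes>\<^bsub>G\<^esub> l \<otimes>\<^bsub>G\<^esub> inv\<^bsub>G\<^esub> (inv\<^bsub>G\<^esub> g)"
          using h unfolding conj_set_def by blast
        have lG: "l \<in> carrier G" using l Lc by auto
        have hG: "h \<in> carrier G" using h Lc by auto
        have "g \<otimes>\<^bsub>G\<^esub> h \<otimes>\<^bsub>G\<^esub> inv\<^bsub>G\<^esub> g = l" unfolding l(2)
          by (rule group.conj_back[OF gG g lG])
        moreover have "\<Delta> g (\<phi> h) = \<phi> (g \<otimes>\<^bsub>G\<^esub> h \<otimes>\<^bsub>G\<^esub> inv\<^bsub>G\<^esub> g)"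
          unfolding \<Delta>_def using g hG by simp
        ultimately show "g \<otimes>\<^bsub>G\<^esub> h \<otimes>\<^bsub>G\<^esub> inv\<^bsub>G\<^esub> g \<in> L \<and>
           \<Delta> g (\<phi> h) = \<phi> (g \<otimes>\<^bsub>G\<^esub> h \<otimes>\<^bsub>G\<^esub> inv\<^bsub>G\<^esub> g)" using l(1) by simp
      qed
      thus "\<exists>L'. finite_index_in G L' L \<and>
        (\<forall>h\<in>L'. g \<otimes>\<^bsub>G\<^esub> h \<otimes>\<^bsub>G\<^esub> inv\<^bsub>G\<^esub> g \<in> L \<and>
           \<Delta> g (\<phi> h) = \<phi> (g \<otimes>\<^bsub>G\<^esub> h \<otimes>\<^bsub>G\<^esub> inv\<^bsub>G\<^esub> g))" using fi by blast
    qed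
  qed
  obtain K0 where K0: "compactin T K0" and K0cov: "\<And>e. e \<in> carrier E \<Longrightarrow> \<exists>k\<in>K0. \<exists>h\<in>\<phi> ` L. e = k \<otimes>\<^bsub>E\<^esub> h"
    using cocompact_cover[OF lc coc] by blast
  have K0E: "K0 \<subseteq> carrier E" using K0 tsp by (simp add: compactin_def)
  define K1 where "K1 = K0 \<union> (\<lambda>k. inv\<^bsub>E\<^esub> k) ` K0"
  have K1c: "compactin T K1" unfolding K1_def
    by (rule compactin_Un[OF K0 image_compactin[OF K0 icont]])
  have K1inv: "inv\<^bsub>E\<^esub> k \<in> K1" if k: "k \<in> K1" for k
  proof (cases "k \<in> K0")
    case True thus ?thesis unfolding K1_def by blast
  next
    case False
    then obtain k0 where "k0 \<in> K0" "k = inv\<^bsub>E\<^esub> k0" using k unfolding K1_def by blast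
    thus ?thesis using K0E unfolding K1_def by auto
  qed
  have cover: "\<exists>h\<in>L. \<exists>k\<in>K1. e = \<phi> h \<otimes>\<^bsub>E\<^esub> k" if e: "e \<in> carrier E" for e
  proof -
    have "inv\<^bsub>E\<^esub> e \<in> carrier E" using e by simp
    then obtain k h where kh: "k \<in> K0" "h \<in> L" "inv\<^bsub>E\<^esub> e = k \<otimes>\<^bsub>E\<^esub> \<phi> h" using K0cov by blast
    have kE: "k \<in> carrier E" and hG: "h \<in> carrier G" using kh K0E Lc by auto
    have "e = inv\<^bsub>E\<^esub> (inv\<^bsub>E\<^esub> e)" using e by simp
    also have "\<dots> = \<phi> (inv\<^bsub>G\<^esub> h) \<otimes>\<^bsub>E\<^esub> inv\<^bsub>E\<^esub> k" unfolding kh(3) using kE hG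
      by (simp add: group.inv_mult_group[OF gE])
    finally have "e = \<phi> (inv\<^bsub>G\<^esub> h) \<otimes>\<^bsub>E\<^esub> inv\<^bsub>E\<^esub> k" .
    moreover have "inv\<^bsub>G\<^esub> h \<in> L" using kh(2) by (rule subgroup.m_inv_closed[OF sgL])
    moreover have "inv\<^bsub>E\<^esub> k \<in> K1" using kh(1) unfolding K1_def by blast
    ultimately show ?thesis by blast
  qed
  have fin: "finite {x \<in> L. \<phi> x \<in> C}" if C: "compactin T C" for C
    by (rule fib_finite[OF gG gE hom sgL ker discrete_compact_finite[OF disc C]])
  have uc: "uniformly_commensurated G L"
    unfolding uniformly_commensurated_def
  proof (intro allI impI)
    fix S assume S: "finite S \<and> S \<subseteq> L \<and> generate G S = L"
    interpret ec: engctx E T G L \<phi> S K1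
      by (rule engctx.intro[OF topgrp.intro[OF tg]], rule engctx_axioms.intro)
         (use gG sgL hom S K1c K1inv cover fin in auto)
    show "\<exists>K A. \<forall>g\<in>carrier G. \<exists>f. quasi_isometry (word_dist G S) L K A f \<and>
         (\<exists>C. \<forall>h\<in>L \<inter> conj_set G (inv\<^bsub>G\<^esub> g) L.
                word_dist G S (f h) (g \<otimes>\<^bsub>G\<^esub> h \<otimes>\<^bsub>G\<^esub> inv\<^bsub>G\<^esub> g) \<le> C)"
      using ec.qi by blast
  qed
  show ?thesis using eng uc by blast
qed


end
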